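(* Let $\mathbb{T}=\mathbb{R}/\mathbb{Z}$. There exists a constant $C>0$, independent of the meshes and of $g$, such that $$\|\mathcal{I}_hg\|_{H^2_{h,\Delta t}(\mathbb{T})}\le(1+C\Delta t)\|g\|_{H^2_{h,\Delta t}(\mathbb{T})}\quad\text{for all }g\in H^2(\mathbb{T}).$$ Furthermore, if there is a constant $C_2>0$ with $\Delta t\le C_2\Delta t'$, then there exists a constant $C>0$ such that $\|\mathcal{I}_hg\|_{H^2_{h,\Delta t}(\mathbb{T})}\le(1+C\Delta t_n)\|g\|_{H^2_{h,\Delta t}(\mathbb{T})}$ for all $g\in H^2(\mathbb{T})$ and all $n$.
   Context: Temporal mesh $0=t^0<\dots<t^N=T$, $\Delta t_n=t^{n+1}-t^n$, $\Delta t=\max_n\Delta t_n<1$, $\Delta t'=\min_n\Delta t_n$. Spatial mesh $0=x_0<\dots<x_M=1$, $h=\max_j(x_{j+1}-x_j)$. $V_h$: $C^1(\mathbb{T})$ functions, cubic on each $[x_j,x_{j+1}]$. $\mathcal{I}_h:C^1(\mathbb{T})\to V_h$: $(\mathcal{I}_hg)(x_j)=g(x_j)$, $(\mathcal{I}_hg)'(x_j)=g'(x_j)$, $j=0,\dots,M-1$. $\|g\|_{H^2_{h,\Delta t}(\mathbb{T})}=\big(\|g\|_{L^2(\mathbb{T})}^2+\tfrac{h^4}{\Delta t}\|g''\|_{L^2(\mathbb{T})}^2\big)^{1/2}$. *)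

theory Defs
  imports "HOL-Analysis.Analysis"
begin

text \<open>Functions on the torus T = R/Z are represented as 1-periodic functions on the reals.\<close>

definition time_mesh :: "nat \<Rightarrow> (nat \<Rightarrow> real) \<Rightarrow> real \<Rightarrow> bool" where
  "time_mesh N t T \<longleftrightarrow> N \<ge> 1 \<and> t 0 = 0 \<and> t N = T \<and> (\<forall>n<N. t n < t (Suc n))"

definition dt_max :: "nat \<Rightarrow> (nat \<Rightarrow> real) \<Rightarrow> real" where
  "dt_max N t = Max {t (Suc n) - t n | n. n < N}"

definition dt_min :: "nat \<Rightarrow> (nat \<Rightarrow> real) \<Rightarrow> real" where
  "dt_min N t = Min {t (Suc n) - t n | n. n < N}"

definition space_mesh :: "nat \<Rightarrow> (nat \<Rightarrow> real) \<Rightarrow> bool" where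
  "space_mesh M x \<longleftrightarrow> M \<ge> 1 \<and> x 0 = 0 \<and> x M = 1 \<and> (\<forall>j<M. x j < x (Suc j))"

definition mesh_h :: "nat \<Rightarrow> (nat \<Rightarrow> real) \<Rightarrow> real" where
  "mesh_h M x = Max {x (Suc j) - x j | j. j < M}"

definition Vh :: "nat \<Rightarrow> (nat \<Rightarrow> real) \<Rightarrow> (real \<Rightarrow> real) set" where
  "Vh M x = {v. (\<forall>y. v (y + 1) = v y)
     \<and> (\<exists>v'. continuous_on UNIV v' \<and> (\<forall>y. (v has_real_derivative v' y) (at y)))
     \<and> (\<forall>j<M. \<exists>a b c d. \<forall>y\<in>{x j..x (Suc j)}. v y = a + b * y + c * y ^ 2 + d * y ^ 3)}"

definition interp :: "nat \<Rightarrow> (nat \<Rightarrow> real) \<Rightarrow> (real \<Rightarrow> real) \<Rightarrow> (real \<Rightarrow> real)" where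
  "interp M x g = (THE v. v \<in> Vh M x \<and>
      (\<forall>j<M. v (x j) = g (x j) \<and> deriv v (x j) = deriv g (x j)))"

text \<open>g in H^2(T), with first derivative g1 and (weak) second derivative g2:
  g is 1-periodic and differentiable with derivative g1, g1 is absolutely continuous
  with derivative g2 (g1 b - g1 a = int_a^b g2), and g2 is locally square integrable.\<close>
definition H2_per :: "(real \<Rightarrow> real) \<Rightarrow> (real \<Rightarrow> real) \<Rightarrow> (real \<Rightarrow> real) \<Rightarrow> bool" where
  "H2_per g g1 g2 \<longleftrightarrow> (\<forall>y. g (y + 1) = g y)
     \<and> (\<forall>y. (g has_real_derivative g1 y) (at y))
     \<and> (\<forall>a b. g2 integrable_on {a..b} \<and> (\<lambda>y. (g2 y) ^ 2) integrable_on {a..b})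
     \<and> (\<forall>a b. a \<le> b \<longrightarrow> g1 b - g1 a = integral {a..b} g2)"

definition H2hdt_norm :: "real \<Rightarrow> real \<Rightarrow> (real \<Rightarrow> real) \<Rightarrow> (real \<Rightarrow> real) \<Rightarrow> real" where
  "H2hdt_norm h dt f f2 = sqrt (integral {0..1} (\<lambda>y. (f y) ^ 2)
       + h ^ 4 / dt * integral {0..1} (\<lambda>y. (f2 y) ^ 2))"

end

theory Submission
  imports Defs
begin

lemma moment_borel:
  fixes w :: "real \<Rightarrow> real"
  assumes ab: "a \<le> b" and wm[measurable]: "w \<in> borel_measurable borel"
    and wi: "integrable lborel w" and w0: "\<And>s. s \<notin> {a..b} \<Longrightarrow> w s = 0"
  shows "((\<lambda>s. (s - a) * w s) has_integral integral {a..b} (\<lambda>r. integral {r..b} w)) {a..b}"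
proof -
  define F where "F = (\<lambda>s r::real. if a \<le> r \<and> r \<le> s then w s else 0)"
  have Fm[measurable]: "(\<lambda>(s, r). F s r) \<in> borel_measurable (lborel \<Otimes>\<^sub>M lborel)"
    unfolding F_def by measurable
  have inner_r: "(\<integral>r. norm (F s r) \<partial>lborel) = indicator {a..b} s * ((s - a) * \<bar>w s\<bar>)" for s
  proof -
    have "(\<lambda>r. norm (F s r)) = (\<lambda>r. indicator {a..s} r * \<bar>w s\<bar>)"
      by (auto simp: F_def indicator_def)
    then have "(\<integral>r. norm (F s r) \<partial>lborel) = measure lborel {a..s} * \<bar>w s\<bar>"
      by simp
    then show ?thesis using w0[of s] by (auto simp: indicator_def)
  qed
  have inner_r2: "(\<integral>r. F s r \<partial>lborel) = indicator {a..b} s * ((s - a) * w s)" for s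
  proof -
    have "(\<lambda>r. F s r) = (\<lambda>r. indicator {a..s} r * w s)"
      by (auto simp: F_def indicator_def)
    then have "(\<integral>r. F s r \<partial>lborel) = measure lborel {a..s} * w s"
      by simp
    then show ?thesis using w0[of s] by (auto simp: indicator_def)
  qed
  have int1: "integrable lborel (\<lambda>s. indicator {a..b} s * ((s - a) * \<bar>w s\<bar>))"
  proof (rule Bochner_Integration.integrable_bound[where f="\<lambda>s. (b - a) * w s"])
    show "integrable lborel (\<lambda>s. (b - a) * w s)" using wi by simp
    show "(\<lambda>s. indicator {a..b} s * ((s - a) * \<bar>w s\<bar>)) \<in> borel_measurable lborel" by measurable
    show "AE x in lborel. norm (indicator {a..b} x * ((x - a) * \<bar>w x\<bar>)) \<le> norm ((b - a) * w x)"
      using ab by (auto simp: indicator_def abs_mult intro!: mult_right_mono)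
  qed
  have Fint: "integrable (lborel \<Otimes>\<^sub>M lborel) (\<lambda>(s, r). F s r)"
  proof (rule lborel_pair.Fubini_integrable)
    show "integrable lborel (\<lambda>s. \<integral>r. norm (case (s, r) of (s, r) \<Rightarrow> F s r) \<partial>lborel)"
      using int1 inner_r by simp
    show "AE s in lborel. integrable lborel (\<lambda>r. case (s, r) of (s, r) \<Rightarrow> F s r)"
    proof (rule AE_I2)
      fix s
      have "(\<lambda>r. F s r) = (\<lambda>r. indicator {a..s} r * w s)"
        by (auto simp: F_def indicator_def)
      moreover have "integrable lborel (\<lambda>r. indicator {a..s} r * w s)"
        by (intro integrable_mult_left integrable_real_indicator) (auto simp: emeasure_lborel_Icc_eq)
      ultimately show "integrable lborel (\<lambda>r. case (s, r) of (s, r) \<Rightarrow> F s r)" by simp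
    qed
  qed fact
  have inner_s: "(\<integral>s. F s r \<partial>lborel) = indicator {a..b} r * integral {r..b} w" for r
  proof -
    have "(\<lambda>s. F s r) = (\<lambda>s. indicator {a..} r * (indicator {r..b} s *\<^sub>R w s))"
      using w0 by (auto simp: F_def indicator_def fun_eq_iff)
    then have "(\<integral>s. F s r \<partial>lborel) = indicator {a..} r * (LINT s:{r..b}|lborel. w s)"
      by (simp add: set_lebesgue_integral_def)
    also have "(LINT s:{r..b}|lborel. w s) = integral {r..b} w"
      by (rule set_borel_integral_eq_integral(2))
         (use integrable_mult_indicator[OF _ wi, of "{r..b}"] in \<open>simp add: set_integrable_def\<close>)
    finally show ?thesis
      by (cases "r \<le> b") (auto simp: indicator_def)
  qed
  have Fub: "(\<integral>r. (\<integral>s. F s r \<partial>lborel) \<partial>lborel) = (\<integral>s. (\<integral>r. F s r \<partial>lborel) \<partial>lborel)"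
    by (rule lborel_pair.Fubini_integral) (use Fint in simp)
  have i1: "integrable lborel (\<lambda>r. \<integral>s. F s r \<partial>lborel)"
    using lborel_pair.integrable_snd[OF Fint] by simp
  have i2: "integrable lborel (\<lambda>s. \<integral>r. F s r \<partial>lborel)"
    using lborel_pair.integrable_fst[OF Fint] by simp
  have si1: "set_integrable lborel {a..b} (\<lambda>r. integral {r..b} w)"
    using i1 unfolding inner_s set_integrable_def by simp
  have si2: "set_integrable lborel {a..b} (\<lambda>s. (s - a) * w s)"
    using i2 unfolding inner_r2 set_integrable_def by simp
  have e1: "(LINT r:{a..b}|lborel. integral {r..b} w) = integral {a..b} (\<lambda>r. integral {r..b} w)"
    by (rule set_borel_integral_eq_integral(2)[OF si1])
  have e2: "(LINT s:{a..b}|lborel. (s - a) * w s) = integral {a..b} (\<lambda>s. (s - a) * w s)"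
    by (rule set_borel_integral_eq_integral(2)[OF si2])
  have "(LINT r:{a..b}|lborel. integral {r..b} w) = (LINT s:{a..b}|lborel. (s - a) * w s)"
    using Fub unfolding inner_s inner_r2 set_lebesgue_integral_def by simp
  then have "integral {a..b} (\<lambda>s. (s - a) * w s) = integral {a..b} (\<lambda>r. integral {r..b} w)"
    using e1 e2 by simp
  moreover have "(\<lambda>s. (s - a) * w s) integrable_on {a..b}"
    by (rule set_borel_integral_eq_integral(1)[OF si2])
  ultimately show ?thesis
    by (metis has_integral_integrable_integral)
qed

lemma moment:
  fixes w :: "real \<Rightarrow> real"
  assumes ab: "a \<le> b" and wa: "w absolutely_integrable_on {a..b}"
  shows "((\<lambda>s. (s - a) * w s) has_integral integral {a..b} (\<lambda>r. integral {r..b} w)) {a..b}"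
proof -
  define f where "f = (\<lambda>x. indicator {a..b} x * w x)"
  have fi: "integrable lebesgue f"
    using wa unfolding absolutely_integrable_on_def set_integrable_def f_def by simp
  then have "f \<in> borel_measurable lebesgue" by (rule borel_measurable_integrable)
  then obtain g' where g'm: "g' \<in> borel_measurable lborel" and ae: "AE x in lborel. f x = g' x"
    using completion_ex_borel_measurable_real by blast
  define w' where "w' = (\<lambda>x. indicator {a..b} x * g' x)"
  have w'm[measurable]: "w' \<in> borel_measurable borel" unfolding w'_def using g'm by measurable
  have ae2: "AE x in lborel. f x = w' x"
    using ae proof eventually_elim
    fix x assume "f x = g' x"
    then show "f x = w' x" by (cases "x \<in> {a..b}") (auto simp: f_def w'_def)
  qed
  then obtain N where N: "{x \<in> space lborel. \<not> f x = w' x} \<subseteq> N" "N \<in> null_sets lborel"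
    using ae2 by (elim AE_E) (auto simp: null_sets_def)
  have negN: "negligible N"
    using N(2) by (simp add: negligible_iff_null_sets null_sets_completionI)
  have fw': "w x = w' x" if "x \<notin> N" "x \<in> {a..b}" for x
  proof -
    have "f x = w' x" using N(1) that(1) by auto
    then show ?thesis using that(2) by (simp add: f_def)
  qed
  have "integrable lebesgue w'"
    using fi ae2 w'm by (subst integrable_cong_AE[where g=f]) (auto intro: AE_completion measurable_completion)
  then have w'i: "integrable lborel w'"
    using integrable_completion[of w' lborel] w'm by simp
  have w'0: "w' s = 0" if "s \<notin> {a..b}" for s using that by (simp add: w'_def)
  have H: "((\<lambda>s. (s - a) * w' s) has_integral integral {a..b} (\<lambda>r. integral {r..b} w')) {a..b}"
    by (rule moment_borel[OF ab w'm w'i w'0])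
  have "integral {a..b} (\<lambda>r. integral {r..b} w') = integral {a..b} (\<lambda>r. integral {r..b} w)"
  proof (rule integral_cong)
    fix r assume r: "r \<in> {a..b}"
    show "integral {r..b} w' = integral {r..b} w"
      by (rule integral_spike[OF negN]) (use fw' r in auto)
  qed
  moreover have "((\<lambda>s. (s - a) * w s) has_integral integral {a..b} (\<lambda>r. integral {r..b} w')) {a..b}"
    by (rule has_integral_spike[OF negN _ H]) (use fw' in auto)
  ultimately show ?thesis by simp
qed

definition hc2 :: "real \<Rightarrow> real \<Rightarrow> real \<Rightarrow> real \<Rightarrow> real \<Rightarrow> real \<Rightarrow> real" where
  "hc2 a b A A' B B' = (3 * (B - A - A' * (b - a)) - (B' - A') * (b - a)) / (b - a)^2"
definition hc3 :: "real \<Rightarrow> real \<Rightarrow> real \<Rightarrow> real \<Rightarrow> real \<Rightarrow> real \<Rightarrow> real" where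
  "hc3 a b A A' B B' = ((B' - A') * (b - a) - 2 * (B - A - A' * (b - a))) / (b - a)^3"
definition herm :: "real \<Rightarrow> real \<Rightarrow> real \<Rightarrow> real \<Rightarrow> real \<Rightarrow> real \<Rightarrow> real \<Rightarrow> real" where
  "herm a b A A' B B' y = A + A' * (y - a) + hc2 a b A A' B B' * (y - a)^2 + hc3 a b A A' B B' * (y - a)^3"
definition herm1 :: "real \<Rightarrow> real \<Rightarrow> real \<Rightarrow> real \<Rightarrow> real \<Rightarrow> real \<Rightarrow> real \<Rightarrow> real" where
  "herm1 a b A A' B B' y = A' + 2 * hc2 a b A A' B B' * (y - a) + 3 * hc3 a b A A' B B' * (y - a)^2"
definition herm2 :: "real \<Rightarrow> real \<Rightarrow> real \<Rightarrow> real \<Rightarrow> real \<Rightarrow> real \<Rightarrow> real \<Rightarrow> real" where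
  "herm2 a b A A' B B' y = 2 * hc2 a b A A' B B' + 6 * hc3 a b A A' B B' * (y - a)"

lemma herm_deriv: "(herm a b A A' B B' has_real_derivative herm1 a b A A' B B' y) (at y)"
  unfolding herm_def herm1_def
  by (auto intro!: derivative_eq_intros simp: power2_eq_square power3_eq_cube algebra_simps)

lemma herm1_deriv: "(herm1 a b A A' B B' has_real_derivative herm2 a b A A' B B' y) (at y)"
  unfolding herm1_def herm2_def
  by (auto intro!: derivative_eq_intros simp: power2_eq_square algebra_simps)

lemma herm_ends:
  assumes "a \<noteq> b"
  shows "herm a b A A' B B' a = A" "herm1 a b A A' B B' a = A'"
    "herm a b A A' B B' b = B" "herm1 a b A A' B B' b = B'"
proof -
  define t where "t = b - a"
  have l: "t \<noteq> 0" using assms by (simp add: t_def)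
  define D where "D = B - A - A' * t"
  define E where "E = B' - A'"
  have c2: "hc2 a b A A' B B' * t^2 = 3 * D - E * t" "hc2 a b A A' B B' * t = (3 * D - E * t) / t"
    using l by (simp_all add: hc2_def D_def E_def t_def[symmetric] power2_eq_square field_simps)
  have c3: "hc3 a b A A' B B' * t^3 = E * t - 2 * D" "hc3 a b A A' B B' * t^2 = (E * t - 2 * D) / t"
    using l by (simp_all add: hc3_def D_def E_def t_def[symmetric] power2_eq_square power3_eq_cube field_simps)
  show "herm a b A A' B B' a = A" "herm1 a b A A' B B' a = A'" by (simp_all add: herm_def herm1_def)
  have "herm a b A A' B B' b = A + A' * t + hc2 a b A A' B B' * t^2 + hc3 a b A A' B B' * t^3"
    by (simp add: herm_def t_def)
  also have "\<dots> = B" unfolding c2 c3 by (simp add: D_def)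
  finally show "herm a b A A' B B' b = B" .
  have S: "2 * ((3 * D - E * t) / t) + 3 * ((E * t - 2 * D) / t) = E"
  proof -
    have "2 * ((3 * D - E * t) / t) + 3 * ((E * t - 2 * D) / t) = (2 * (3 * D - E * t) + 3 * (E * t - 2 * D)) / t"
      by (simp only: add_divide_distrib times_divide_eq_right)
    also have "2 * (3 * D - E * t) + 3 * (E * t - 2 * D) = E * t"
      by (simp add: algebra_simps)
    finally show ?thesis using l by simp
  qed
  have "herm1 a b A A' B B' b = A' + 2 * (hc2 a b A A' B B' * t) + 3 * (hc3 a b A A' B B' * t^2)"
    by (simp add: herm1_def t_def)
  also have "\<dots> = A' + E" unfolding c2 c3 using S by simp
  finally show "herm1 a b A A' B B' b = B'" by (simp add: E_def)
qed

lemma herm_shift: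
  "herm (a + c) (b + c) A A' B B' (y + c) = herm a b A A' B B' y"
  "herm1 (a + c) (b + c) A A' B B' (y + c) = herm1 a b A A' B B' y"
  "herm2 (a + c) (b + c) A A' B B' (y + c) = herm2 a b A A' B B' y"
proof -
  have e: "b + c - (a + c) = b - a" "y + c - (a + c) = y - a" by simp_all
  have h2: "hc2 (a + c) (b + c) A A' B B' = hc2 a b A A' B B'" unfolding hc2_def e(1) ..
  have h3: "hc3 (a + c) (b + c) A A' B B' = hc3 a b A A' B B'" unfolding hc3_def e(1) ..
  show "herm (a + c) (b + c) A A' B B' (y + c) = herm a b A A' B B' y"
    unfolding herm_def h2 h3 e(2) ..
  show "herm1 (a + c) (b + c) A A' B B' (y + c) = herm1 a b A A' B B' y"
    unfolding herm1_def h2 h3 e(2) ..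
  show "herm2 (a + c) (b + c) A A' B B' (y + c) = herm2 a b A A' B B' y"
    unfolding herm2_def h2 h3 e(2) ..
qed

lemma cs_ineq:
  fixes u :: "real \<Rightarrow> real"
  assumes as: "a \<le> s" and ui: "u integrable_on {a..s}" and u2i: "(\<lambda>t. (u t)^2) integrable_on {a..s}"
  shows "(integral {a..s} u)^2 \<le> (s - a) * integral {a..s} (\<lambda>t. (u t)^2)"
proof (cases "a = s")
  case True then show ?thesis by simp
next
  case False
  then have l: "s - a > 0" using as by simp
  define m where "m = integral {a..s} u / (s - a)"
  have c: "((\<lambda>t. m^2) has_integral m^2 * (s - a)) {a..s}"
    using has_integral_const_real[of "m^2" a s] as by (simp add: mult.commute)
  have hi: "((\<lambda>t. (u t)^2 - 2 * m * u t + m^2) has_integral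
        (integral {a..s} (\<lambda>t. (u t)^2) - 2 * m * integral {a..s} u + m^2 * (s - a))) {a..s}"
  proof -
    have h1: "((\<lambda>t. (u t)^2) has_integral integral {a..s} (\<lambda>t. (u t)^2)) {a..s}"
      using u2i by (rule integrable_integral)
    have h2: "((\<lambda>t. (2 * m) * u t) has_integral (2 * m) * integral {a..s} u) {a..s}"
      using ui by (intro has_integral_mult_right integrable_integral)
    show ?thesis using has_integral_add[OF has_integral_diff[OF h1 h2] c] by simp
  qed
  have nn: "\<forall>t\<in>{a..s}. 0 \<le> (u t)^2 - 2 * m * u t + m^2"
  proof
    fix t
    have "(u t)^2 - 2 * m * u t + m^2 = (u t - m)^2" by (simp add: power2_eq_square algebra_simps)
    then show "0 \<le> (u t)^2 - 2 * m * u t + m^2" by simp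
  qed
  have H: "0 \<le> integral {a..s} (\<lambda>t. (u t)^2) - 2 * m * integral {a..s} u + m^2 * (s - a)"
    by (rule has_integral_nonneg[OF hi]) (use nn in auto)
  define I where "I = integral {a..s} u"
  define L where "L = s - a"
  have Lp: "L > 0" using l by (simp add: L_def)
  have m1: "2 * m * I = 2 * (I^2 / L)" by (simp add: m_def I_def L_def power2_eq_square)
  have m2: "m^2 * L = I^2 / L" using Lp by (simp add: m_def I_def[symmetric] L_def[symmetric] power2_eq_square)
  have "I^2 / L \<le> integral {a..s} (\<lambda>t. (u t)^2)"
    using H m1 m2 unfolding I_def[symmetric] L_def[symmetric] by linarith
  then have "I^2 \<le> integral {a..s} (\<lambda>t. (u t)^2) * L" using Lp by (simp add: pos_divide_le_eq)
  then show ?thesis by (simp add: I_def L_def mult.commute)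
qed

lemma local_est:
  fixes g g1 g2 :: "real \<Rightarrow> real" and al be :: real
  assumes ab: "al < be"
    and gd: "\<And>y. (g has_real_derivative g1 y) (at y)"
    and g2i: "\<And>a b. g2 integrable_on {a..b}"
    and g22i: "\<And>a b. (\<lambda>y. (g2 y)^2) integrable_on {a..b}"
    and g1i: "\<And>a b. a \<le> b \<Longrightarrow> g1 b - g1 a = integral {a..b} g2"
  defines "p \<equiv> herm al be (g al) (g1 al) (g be) (g1 be)"
    and "p1 \<equiv> herm1 al be (g al) (g1 al) (g be) (g1 be)"
    and "p2 \<equiv> herm2 al be (g al) (g1 al) (g be) (g1 be)"
  shows "integral {al..be} (\<lambda>y. (g y - p y)^2)
           \<le> (be - al)^4 * (integral {al..be} (\<lambda>y. (g2 y)^2) - integral {al..be} (\<lambda>y. (p2 y)^2))"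
proof -
  define l where "l = be - al"
  have l0: "l > 0" using ab by (simp add: l_def)
  define c2 where "c2 = hc2 al be (g al) (g1 al) (g be) (g1 be)"
  define c3 where "c3 = hc3 al be (g al) (g1 al) (g be) (g1 be)"
  have p2e: "p2 y = 2 * c2 + 6 * c3 * (y - al)" for y
    by (simp add: p2_def herm2_def c2_def c3_def)
  have pd: "(p has_real_derivative p1 y) (at y)" for y unfolding p_def p1_def by (rule herm_deriv)
  have p1d: "(p1 has_real_derivative p2 y) (at y)" for y unfolding p1_def p2_def by (rule herm1_deriv)
  have ends: "p al = g al" "p be = g be" "p1 al = g1 al" "p1 be = g1 be"
    using herm_ends[of al be] ab unfolding p_def p1_def by auto
  define e where "e = (\<lambda>y. g y - p y)"
  define e1 where "e1 = (\<lambda>y. g1 y - p1 y)"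
  define e2 where "e2 = (\<lambda>y. g2 y - p2 y)"
  have ed: "(e has_real_derivative e1 y) (at y)" for y
    unfolding e_def e1_def by (intro derivative_intros gd pd)
  have econt: "continuous_on S e" for S
    using ed by (meson DERIV_isCont continuous_at_imp_continuous_on)
  have p2cont: "continuous_on S p2" for S
    unfolding p2e by (intro continuous_intros)
  have p2int: "p2 integrable_on {a..b}" for a b
    by (rule integrable_continuous_interval[OF p2cont])
  have p2I: "integral {a..b} p2 = p1 b - p1 a" if "a \<le> b" for a b
  proof -
    have "(p2 has_integral p1 b - p1 a) {a..b}"
      using that p1d by (intro fundamental_theorem_of_calculus)
        (auto simp: has_real_derivative_iff_has_vector_derivative[symmetric] intro: has_field_derivative_at_within)
    then show ?thesis by (rule integral_unique)
  qed
  have e2int: "e2 integrable_on {a..b}" for a b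
    unfolding e2_def by (intro integrable_diff g2i p2int)
  have e1I: "e1 b - e1 a = integral {a..b} e2" if "a \<le> b" for a b
    using g1i[OF that] p2I[OF that] g2i p2int unfolding e1_def e2_def
    by (simp add: integral_diff)
  have e0: "e al = 0" "e be = 0" "e1 al = 0" "e1 be = 0"
    using ends by (simp_all add: e_def e1_def)
  have eI: "(e1 has_integral e be - e al) {al..be}"
    using ab ed by (intro fundamental_theorem_of_calculus)
        (auto simp: has_real_derivative_iff_has_vector_derivative[symmetric] intro: has_field_derivative_at_within)
  have g2abs: "g2 absolutely_integrable_on {al..be}"
  proof (rule measurable_bounded_by_integrable_imp_absolutely_integrable)
    show "g2 \<in> borel_measurable (lebesgue_on {al..be})"
      by (rule integrable_imp_measurable[OF g2i])
    show "(\<lambda>y. (1 + (g2 y)^2) / 2) integrable_on {al..be}"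
      using Henstock_Kurzweil_Integration.integrable_add[OF integrable_const_ivl g22i, of 1 al be] by simp
    show "norm (g2 y) \<le> (1 + (g2 y)^2) / 2" for y
    proof -
      have "0 \<le> (\<bar>g2 y\<bar> - 1)^2" by simp
      then show ?thesis by (simp add: power2_eq_square algebra_simps)
    qed
  qed simp
  have e2abs: "e2 absolutely_integrable_on {al..be}"
    unfolding e2_def
    by (rule set_integral_diff(1)[OF g2abs absolutely_integrable_continuous_real[OF p2cont]])
  have mom: "((\<lambda>s. (s - al) * e2 s) has_integral integral {al..be} (\<lambda>r. integral {r..be} e2)) {al..be}"
    using moment[OF less_imp_le[OF ab] e2abs] .
  have "integral {al..be} (\<lambda>r. integral {r..be} e2) = integral {al..be} (\<lambda>r. - e1 r)"
    by (rule integral_cong) (use e1I[of _ be] e0 in auto)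
  also have "\<dots> = 0" using eI e0 by (simp add: integral_neg integral_unique)
  finally have mom0: "((\<lambda>s. (s - al) * e2 s) has_integral 0) {al..be}" using mom by simp
  have int0: "(e2 has_integral 0) {al..be}"
    using e1I[of al be] e0 ab e2int[of al be] by (simp add: has_integral_integral)
  have pe: "((\<lambda>s. p2 s * e2 s) has_integral 0) {al..be}"
  proof -
    have "((\<lambda>s. 2 * c2 * e2 s + 6 * c3 * ((s - al) * e2 s)) has_integral (2 * c2 * 0 + 6 * c3 * 0)) {al..be}"
      by (intro has_integral_add has_integral_mult_right int0 mom0)
    then show ?thesis by (simp add: p2e algebra_simps)
  qed
  have p22int: "(\<lambda>y. (p2 y)^2) integrable_on {al..be}"
    by (intro integrable_continuous_interval continuous_intros p2cont)
  have e22: "((\<lambda>y. (e2 y)^2) has_integral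
      (integral {al..be} (\<lambda>y. (g2 y)^2) - 2 * 0 - integral {al..be} (\<lambda>y. (p2 y)^2))) {al..be}"
  proof -
    have "((\<lambda>y. (g2 y)^2 - 2 * (p2 y * e2 y) - (p2 y)^2) has_integral
      (integral {al..be} (\<lambda>y. (g2 y)^2) - 2 * 0 - integral {al..be} (\<lambda>y. (p2 y)^2))) {al..be}"
      by (intro has_integral_diff has_integral_mult_right pe integrable_integral g22i p22int)
    moreover have "(g2 y)^2 - 2 * (p2 y * e2 y) - (p2 y)^2 = (e2 y)^2" for y
      by (simp add: e2_def power2_eq_square algebra_simps)
    ultimately show ?thesis by simp
  qed
  define P where "P = integral {al..be} (\<lambda>y. (e2 y)^2)"
  have P: "P = integral {al..be} (\<lambda>y. (g2 y)^2) - integral {al..be} (\<lambda>y. (p2 y)^2)"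
    using e22 unfolding P_def by (simp add: integral_unique)
  have e22int: "(\<lambda>y. (e2 y)^2) integrable_on {al..be}" using e22 by blast
  have P0: "P \<ge> 0" unfolding P_def by (intro integral_nonneg e22int) simp
  have e1b: "(e1 s)^2 \<le> l * P" if s: "s \<in> {al..be}" for s
  proof -
    have "e1 s = integral {al..s} e2" using e1I[of al s] s e0 by simp
    then have "(e1 s)^2 \<le> (s - al) * integral {al..s} (\<lambda>t. (e2 t)^2)"
      using s by (auto intro!: cs_ineq e2int integrable_on_subinterval[OF e22int])
    also have "\<dots> \<le> l * P"
    proof (rule mult_mono)
      show "s - al \<le> l" using s by (simp add: l_def)
      show "integral {al..s} (\<lambda>t. (e2 t)^2) \<le> P"
        unfolding P_def using s
        by (intro integral_subset_le integrable_on_subinterval[OF e22int] e22int) auto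
      show "0 \<le> l" using l0 by simp
      show "0 \<le> integral {al..s} (\<lambda>t. (e2 t)^2)"
        using s by (intro integral_nonneg integrable_on_subinterval[OF e22int]) auto
    qed
    finally show ?thesis .
  qed
  have eb: "(e s)^2 \<le> l^3 * P" if s: "s \<in> {al..be}" for s
  proof (cases "s = al")
    case True then show ?thesis using e0 P0 l0 by simp
  next
    case False
    then have "al < s" using s by simp
    then obtain z where z: "al < z" "z < s" "e s - e al = (s - al) * e1 z"
      using MVT2[of al s e e1] ed by blast
    have "(e s)^2 = (s - al)^2 * (e1 z)^2" using z e0 by (simp add: power_mult_distrib)
    also have "\<dots> \<le> l^2 * (l * P)"
      using z s by (intro mult_mono power_mono e1b) (auto simp: l_def)
    finally show ?thesis by (simp add: power3_eq_cube power2_eq_square algebra_simps)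
  qed
  have "integral {al..be} (\<lambda>y. (e y)^2) \<le> integral {al..be} (\<lambda>y. l^3 * P)"
    by (intro integral_le eb integrable_continuous_interval continuous_intros econt) auto
  also have "\<dots> = l^4 * P" using ab by (simp add: l_def power_def)
  finally show ?thesis using P by (simp add: e_def l_def)
qed

definition Xk :: "nat \<Rightarrow> (nat \<Rightarrow> real) \<Rightarrow> int \<Rightarrow> real" where
  "Xk M x k = x (nat (k mod int M)) + of_int (k div int M)"

lemma Xk_nj:
  assumes "j < M"
  shows "Xk M x (n * int M + int j) = x j + of_int n"
proof -
  have M: "int M > 0" using assms by simp
  have "(n * int M + int j) mod int M = int j" using assms by simp
  moreover have "(n * int M + int j) div int M = n" using assms by simp
  ultimately show ?thesis by (simp add: Xk_def)
qed

lemma Xk_nj1: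
  assumes sm: "space_mesh M x" and j: "j < M"
  shows "Xk M x (n * int M + int j + 1) = x (Suc j) + of_int n"
proof (cases "Suc j < M")
  case True
  have "n * int M + int j + 1 = n * int M + int (Suc j)" by simp
  then show ?thesis using Xk_nj[OF True, of x n] by (simp only:)
next
  case False
  then have jM: "Suc j = M" using j by simp
  have "n * int M + int j + 1 = (n + 1) * int M + int 0" using jM by (simp add: algebra_simps)
  then have "Xk M x (n * int M + int j + 1) = x 0 + of_int (n + 1)"
    using Xk_nj[of 0 M x "n + 1"] j by simp
  then show ?thesis using sm jM by (simp add: space_mesh_def)
qed

lemma Xk_decomp:
  assumes "M \<ge> 1"
  obtains n j where "j < M" "k = n * int M + int j"
proof
  show "nat (k mod int M) < M" using assms by (simp add: nat_less_iff)
  show "k = (k div int M) * int M + int (nat (k mod int M))" using assms by simp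
qed

lemma Xk_step:
  assumes sm: "space_mesh M x"
  shows "Xk M x k < Xk M x (k + 1)"
proof -
  have M1: "M \<ge> 1" using sm by (simp add: space_mesh_def)
  obtain n j where j: "j < M" and k: "k = n * int M + int j" using Xk_decomp[OF M1] by blast
  show ?thesis using Xk_nj[OF j, of x n] Xk_nj1[OF sm j, of n] sm j unfolding k
    by (simp add: space_mesh_def)
qed

lemma Xk_period:
  assumes sm: "space_mesh M x"
  shows "Xk M x (k + int M) = Xk M x k + 1"
proof -
  have M1: "M \<ge> 1" using sm by (simp add: space_mesh_def)
  obtain n j where j: "j < M" and k: "k = n * int M + int j" using Xk_decomp[OF M1] by blast
  have "k + int M = (n + 1) * int M + int j" unfolding k by (simp add: algebra_simps)
  then have "Xk M x (k + int M) = x j + of_int (n + 1)" using Xk_nj[OF j, of x "n+1"] by simp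
  then show ?thesis using Xk_nj[OF j, of x n] k by simp
qed

lemma Xk_mono_strict:
  assumes sm: "space_mesh M x" and "k < k'"
  shows "Xk M x k < Xk M x k'"
proof -
  obtain d where d: "k' = k + 1 + int d" using assms(2) by (metis add.assoc zless_iff_Suc_zadd of_nat_Suc add.commute)
  have "Xk M x k < Xk M x (k + 1 + int d)"
  proof (induction d)
    case 0 then show ?case using Xk_step[OF sm] by simp
  next
    case (Suc d)
    have "Xk M x (k + 1 + int d) < Xk M x (k + 1 + int d + 1)" by (rule Xk_step[OF sm])
    then show ?case using Suc by (simp add: add.assoc)
  qed
  then show ?thesis using d by simp
qed

lemma Xk_mono:
  assumes sm: "space_mesh M x" and "k \<le> k'"
  shows "Xk M x k \<le> Xk M x k'"
  using Xk_mono_strict[OF sm] assms(2) by (cases "k = k'") (auto simp: le_less)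

lemma Xk_cover:
  assumes sm: "space_mesh M x"
  shows "\<exists>!k. Xk M x k \<le> y \<and> y < Xk M x (k + 1)"
proof -
  have M1: "M \<ge> 1" using sm by (simp add: space_mesh_def)
  define n where "n = floor y"
  define z where "z = y - of_int n"
  have z: "0 \<le> z" "z < 1" unfolding z_def n_def by linarith+
  define S where "S = {j. j < M \<and> x j \<le> z}"
  have S0: "0 \<in> S" using sm z M1 by (simp add: S_def space_mesh_def)
  have Sf: "finite S" by (simp add: S_def)
  define j where "j = Max S"
  have jS: "j \<in> S" using S0 Sf j_def by (metis Max_in empty_iff)
  then have jM: "j < M" and xj: "x j \<le> z" by (auto simp: S_def)
  have xj1: "z < x (Suc j)"
  proof (cases "Suc j < M")
    case True
    have "Suc j \<notin> S" using Sf j_def by (metis Max_ge Suc_n_not_le_n)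
    then show ?thesis using True by (auto simp: S_def)
  next
    case False
    then have "Suc j = M" using jM by simp
    then show ?thesis using sm z by (simp add: space_mesh_def)
  qed
  define k where "k = n * int M + int j"
  have ex: "Xk M x k \<le> y \<and> y < Xk M x (k + 1)"
    using Xk_nj[OF jM, of x n] Xk_nj1[OF sm jM, of n] xj xj1 unfolding k_def z_def by simp
  show ?thesis
  proof (rule ex1I[of _ k])
    show "Xk M x k \<le> y \<and> y < Xk M x (k + 1)" by (rule ex)
    fix k' assume k': "Xk M x k' \<le> y \<and> y < Xk M x (k' + 1)"
    show "k' = k"
    proof (rule ccontr)
      assume "k' \<noteq> k"
      then consider "k' + 1 \<le> k" | "k + 1 \<le> k'" by linarith
      then show False
      proof cases
        case 1 then show False using Xk_mono[OF sm 1] k' ex by linarith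
      next
        case 2 then show False using Xk_mono[OF sm 2] k' ex by linarith
      qed
    qed
  qed
qed

lemma glue_tendsto:
  fixes f L R :: "real \<Rightarrow> real"
  assumes ay: "a < y" and yb: "y < b"
    and L: "(L \<longlongrightarrow> D) (at y)" and R: "(R \<longlongrightarrow> D) (at y)"
    and fL: "\<And>z. a < z \<Longrightarrow> z < y \<Longrightarrow> f z = L z" and fR: "\<And>z. y < z \<Longrightarrow> z < b \<Longrightarrow> f z = R z"
  shows "(f \<longlongrightarrow> D) (at y)"
proof -
  have Ll: "(L \<longlongrightarrow> D) (at_left y)" using L filterlim_at_split by blast
  have Rr: "(R \<longlongrightarrow> D) (at_right y)" using R filterlim_at_split by blast
  have el: "eventually (\<lambda>z. L z = f z) (at_left y)"
    unfolding eventually_at_left_field using ay fL by (intro exI[of _ a]) auto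
  have er: "eventually (\<lambda>z. R z = f z) (at_right y)"
    unfolding eventually_at_right_field using yb fR by (intro exI[of _ b]) auto
  have "(f \<longlongrightarrow> D) (at_left y)" using Lim_transform_eventually[OF Ll el] .
  moreover have "(f \<longlongrightarrow> D) (at_right y)" using Lim_transform_eventually[OF Rr er] .
  ultimately show ?thesis using filterlim_at_split by blast
qed

lemma glue_deriv:
  fixes f L R :: "real \<Rightarrow> real"
  assumes ay: "a < y" and yb: "y < b"
    and L: "(L has_real_derivative D) (at y)" and R: "(R has_real_derivative D) (at y)"
    and fy: "f y = L y" "f y = R y"
    and fL: "\<And>z. a < z \<Longrightarrow> z < y \<Longrightarrow> f z = L z" and fR: "\<And>z. y < z \<Longrightarrow> z < b \<Longrightarrow> f z = R z"
  shows "(f has_real_derivative D) (at y)"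
proof -
  have L': "((\<lambda>z. (L z - L y) / (z - y)) \<longlongrightarrow> D) (at y)" using L by (simp add: has_field_derivative_iff)
  have R': "((\<lambda>z. (R z - R y) / (z - y)) \<longlongrightarrow> D) (at y)" using R by (simp add: has_field_derivative_iff)
  have "((\<lambda>z. (f z - f y) / (z - y)) \<longlongrightarrow> D) (at y)"
    by (rule glue_tendsto[OF ay yb L' R']) (use fy fL fR in auto)
  then show ?thesis by (simp add: has_field_derivative_iff)
qed

lemma glue_cont:
  fixes f L R :: "real \<Rightarrow> real"
  assumes ay: "a < y" and yb: "y < b"
    and L: "isCont L y" and R: "isCont R y"
    and fy: "f y = L y" "f y = R y"
    and fL: "\<And>z. a < z \<Longrightarrow> z < y \<Longrightarrow> f z = L z" and fR: "\<And>z. y < z \<Longrightarrow> z < b \<Longrightarrow> f z = R z"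
  shows "isCont f y"
proof -
  have L': "(L \<longlongrightarrow> f y) (at y)" using L fy by (simp add: isCont_def)
  have R': "(R \<longlongrightarrow> f y) (at y)" using R fy by (simp add: isCont_def)
  have "(f \<longlongrightarrow> f y) (at y)"
    by (rule glue_tendsto[OF ay yb L' R']) (use fL fR in auto)
  then show ?thesis by (simp add: isCont_def)
qed

definition Kk :: "nat \<Rightarrow> (nat \<Rightarrow> real) \<Rightarrow> real \<Rightarrow> int" where
  "Kk M x y = (THE k. Xk M x k \<le> y \<and> y < Xk M x (k + 1))"

definition Hk :: "nat \<Rightarrow> (nat \<Rightarrow> real) \<Rightarrow> (real \<Rightarrow> real) \<Rightarrow> (real \<Rightarrow> real) \<Rightarrow> int \<Rightarrow> real \<Rightarrow> real" where
  "Hk M x g g1 k = herm (Xk M x k) (Xk M x (k + 1)) (g (Xk M x k)) (g1 (Xk M x k)) (g (Xk M x (k + 1))) (g1 (Xk M x (k + 1)))"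
definition H1k :: "nat \<Rightarrow> (nat \<Rightarrow> real) \<Rightarrow> (real \<Rightarrow> real) \<Rightarrow> (real \<Rightarrow> real) \<Rightarrow> int \<Rightarrow> real \<Rightarrow> real" where
  "H1k M x g g1 k = herm1 (Xk M x k) (Xk M x (k + 1)) (g (Xk M x k)) (g1 (Xk M x k)) (g (Xk M x (k + 1))) (g1 (Xk M x (k + 1)))"
definition H2k :: "nat \<Rightarrow> (nat \<Rightarrow> real) \<Rightarrow> (real \<Rightarrow> real) \<Rightarrow> (real \<Rightarrow> real) \<Rightarrow> int \<Rightarrow> real \<Rightarrow> real" where
  "H2k M x g g1 k = herm2 (Xk M x k) (Xk M x (k + 1)) (g (Xk M x k)) (g1 (Xk M x k)) (g (Xk M x (k + 1))) (g1 (Xk M x (k + 1)))"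

definition vv :: "nat \<Rightarrow> (nat \<Rightarrow> real) \<Rightarrow> (real \<Rightarrow> real) \<Rightarrow> (real \<Rightarrow> real) \<Rightarrow> real \<Rightarrow> real" where
  "vv M x g g1 y = Hk M x g g1 (Kk M x y) y"
definition vv1 :: "nat \<Rightarrow> (nat \<Rightarrow> real) \<Rightarrow> (real \<Rightarrow> real) \<Rightarrow> (real \<Rightarrow> real) \<Rightarrow> real \<Rightarrow> real" where
  "vv1 M x g g1 y = H1k M x g g1 (Kk M x y) y"

lemma Kk_prop:
  assumes sm: "space_mesh M x"
  shows "Xk M x (Kk M x y) \<le> y" "y < Xk M x (Kk M x y + 1)"
  using theI'[OF Xk_cover[OF sm, of y]] unfolding Kk_def by auto

lemma Kk_eq:
  assumes sm: "space_mesh M x" and "Xk M x k \<le> y" "y < Xk M x (k + 1)"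
  shows "Kk M x y = k"
  unfolding Kk_def using Xk_cover[OF sm, of y] assms(2,3) by (intro the1_equality) auto

lemma Hk_ends:
  assumes sm: "space_mesh M x"
  shows "Hk M x g g1 k (Xk M x k) = g (Xk M x k)" "H1k M x g g1 k (Xk M x k) = g1 (Xk M x k)"
    "Hk M x g g1 k (Xk M x (k + 1)) = g (Xk M x (k + 1))" "H1k M x g g1 k (Xk M x (k + 1)) = g1 (Xk M x (k + 1))"
  using herm_ends[of "Xk M x k" "Xk M x (k + 1)"] Xk_step[OF sm, of k]
  unfolding Hk_def H1k_def by auto

lemma vv_on:
  assumes sm: "space_mesh M x" and y: "Xk M x k \<le> y" "y \<le> Xk M x (k + 1)"
  shows "vv M x g g1 y = Hk M x g g1 k y" "vv1 M x g g1 y = H1k M x g g1 k y"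
proof -
  have "vv M x g g1 y = Hk M x g g1 k y \<and> vv1 M x g g1 y = H1k M x g g1 k y"
  proof (cases "y < Xk M x (k + 1)")
    case True
    then show ?thesis using Kk_eq[OF sm y(1) True] by (simp add: vv_def vv1_def)
  next
    case False
    then have yk: "y = Xk M x (k + 1)" using y by simp
    have "Kk M x y = k + 1"
      using Kk_eq[OF sm, of "k + 1" y] yk Xk_step[OF sm, of "k + 1"] by simp
    then show ?thesis using Hk_ends[OF sm, of g g1 "k + 1"] Hk_ends[OF sm, of g g1 k] yk
      by (simp add: vv_def vv1_def)
  qed
  then show "vv M x g g1 y = Hk M x g g1 k y" "vv1 M x g g1 y = H1k M x g g1 k y" by auto
qed

lemma Hk_deriv:
  "(Hk M x g g1 k has_real_derivative H1k M x g g1 k y) (at y)"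
  "(H1k M x g g1 k has_real_derivative H2k M x g g1 k y) (at y)"
  unfolding Hk_def H1k_def H2k_def by (rule herm_deriv herm1_deriv)+

lemma vv_deriv:
  assumes sm: "space_mesh M x"
  shows "(vv M x g g1 has_real_derivative vv1 M x g g1 y) (at y)"
proof -
  define k where "k = Kk M x y"
  have k: "Xk M x k \<le> y" "y < Xk M x (k + 1)" using Kk_prop[OF sm, of y] by (auto simp: k_def)
  show ?thesis
  proof (cases "Xk M x k < y")
    case True
    have "(Hk M x g g1 k has_real_derivative H1k M x g g1 k y) (at y)" by (rule Hk_deriv)
    then have "(vv M x g g1 has_real_derivative H1k M x g g1 k y) (at y)"
    proof (rule has_field_derivative_transform_within_open[where S="{Xk M x k <..< Xk M x (k + 1)}"])
      show "y \<in> {Xk M x k<..<Xk M x (k + 1)}" using True k by simp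
      show "\<And>z. z \<in> {Xk M x k<..<Xk M x (k + 1)} \<Longrightarrow> Hk M x g g1 k z = vv M x g g1 z"
        using vv_on(1)[OF sm, of k _ g g1] by (simp add: less_imp_le)
    qed simp
    then show ?thesis using vv_on[OF sm k(1)] k by simp
  next
    case False
    then have yk: "y = Xk M x k" using k by simp
    have kk: "k = (k - 1) + 1" by simp
    have lo: "Xk M x (k - 1) < y" using Xk_step[OF sm, of "k - 1"] yk by simp
    have d1: "H1k M x g g1 (k - 1) y = vv1 M x g g1 y"
      using Hk_ends(4)[OF sm, of g g1 "k - 1"] Hk_ends(2)[OF sm, of g g1 k] vv_on(2)[OF sm k(1)] k yk by simp
    have d2: "H1k M x g g1 k y = vv1 M x g g1 y"
      using Hk_ends(2)[OF sm, of g g1 k] vv_on(2)[OF sm k(1)] k yk by simp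
    have D1: "(Hk M x g g1 (k - 1) has_real_derivative vv1 M x g g1 y) (at y)"
      using Hk_deriv(1)[of M x g g1 "k - 1" y] d1 by simp
    have D2: "(Hk M x g g1 k has_real_derivative vv1 M x g g1 y) (at y)"
      using Hk_deriv(1)[of M x g g1 k y] d2 by simp
    show ?thesis
    proof (rule glue_deriv[OF lo k(2) D1 D2])
      show "vv M x g g1 y = Hk M x g g1 (k - 1) y" "vv M x g g1 y = Hk M x g g1 k y"
        using vv_on[OF sm, of "k - 1" y] vv_on[OF sm k(1)] k lo yk by auto
      show "vv M x g g1 z = Hk M x g g1 (k - 1) z" if "Xk M x (k - 1) < z" "z < y" for z
        using vv_on[OF sm, of "k - 1" z] that yk by simp
      show "vv M x g g1 z = Hk M x g g1 k z" if "y < z" "z < Xk M x (k + 1)" for z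
        using vv_on[OF sm, of k z] that yk by simp
    qed
  qed
qed

lemma herm_poly: "\<exists>a b c d. \<forall>y. herm al be A A' B B' y = a + b * y + c * y^2 + d * y^3"
proof -
  define c2 where "c2 = hc2 al be A A' B B'"
  define c3 where "c3 = hc3 al be A A' B B'"
  show ?thesis
    by (rule exI[of _ "A - A' * al + c2 * al^2 - c3 * al^3"], rule exI[of _ "A' - 2 * c2 * al + 3 * c3 * al^2"],
        rule exI[of _ "c2 - 3 * c3 * al"], rule exI[of _ c3])
       (simp add: herm_def c2_def[symmetric] c3_def[symmetric] power2_eq_square power3_eq_cube algebra_simps)
qed

lemma Xk_int:
  assumes sm: "space_mesh M x" and j: "j < M"
  shows "Xk M x (int j) = x j" "Xk M x (int j + 1) = x (Suc j)"
  using Xk_nj[OF j, of x 0] Xk_nj1[OF sm j, of 0] by simp_all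

lemma vv1_cont:
  assumes sm: "space_mesh M x"
  shows "isCont (vv1 M x g g1) y"
proof -
  define k where "k = Kk M x y"
  have k: "Xk M x k \<le> y" "y < Xk M x (k + 1)" using Kk_prop[OF sm, of y] by (auto simp: k_def)
  have c: "isCont (H1k M x g g1 j) z" for j z using Hk_deriv(2) by (rule DERIV_isCont)
  show ?thesis
  proof (cases "Xk M x k < y")
    case True
    show ?thesis
    proof (rule glue_cont[OF True k(2) c c])
      show "vv1 M x g g1 y = H1k M x g g1 k y" "vv1 M x g g1 y = H1k M x g g1 k y"
        using vv_on(2)[OF sm k(1)] k by auto
      show "vv1 M x g g1 z = H1k M x g g1 k z" if "Xk M x k < z" "z < y" for z
        using vv_on(2)[OF sm, of k z] that k by simp
      show "vv1 M x g g1 z = H1k M x g g1 k z" if "y < z" "z < Xk M x (k + 1)" for z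
        using vv_on(2)[OF sm, of k z] that k by simp
    qed
  next
    case False
    then have yk: "y = Xk M x k" using k by simp
    have lo: "Xk M x (k - 1) < y" using Xk_step[OF sm, of "k - 1"] yk by simp
    show ?thesis
    proof (rule glue_cont[OF lo k(2) c c])
      show "vv1 M x g g1 y = H1k M x g g1 (k - 1) y" "vv1 M x g g1 y = H1k M x g g1 k y"
        using vv_on(2)[OF sm, of "k - 1" y] vv_on(2)[OF sm k(1)] k lo yk by auto
      show "vv1 M x g g1 z = H1k M x g g1 (k - 1) z" if "Xk M x (k - 1) < z" "z < y" for z
        using vv_on(2)[OF sm, of "k - 1" z] that yk by simp
      show "vv1 M x g g1 z = H1k M x g g1 k z" if "y < z" "z < Xk M x (k + 1)" for z
        using vv_on(2)[OF sm, of k z] that yk by simp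
    qed
  qed
qed

lemma vv_period:
  assumes sm: "space_mesh M x" and gp: "\<And>y. g (y + 1) = g y" and g1p: "\<And>y. g1 (y + 1) = g1 y"
  shows "vv M x g g1 (y + 1) = vv M x g g1 y"
proof -
  define k where "k = Kk M x y"
  have k: "Xk M x k \<le> y" "y < Xk M x (k + 1)" using Kk_prop[OF sm, of y] by (auto simp: k_def)
  have e1: "Xk M x (k + int M) = Xk M x k + 1" by (rule Xk_period[OF sm])
  have e2: "Xk M x (k + int M + 1) = Xk M x (k + 1) + 1"
    using Xk_period[OF sm, of "k + 1"] by (simp add: algebra_simps)
  have "Kk M x (y + 1) = k + int M" using k e1 e2 by (intro Kk_eq[OF sm]) auto
  then have "vv M x g g1 (y + 1) = Hk M x g g1 (k + int M) (y + 1)" by (simp add: vv_def)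
  also have "\<dots> = herm (Xk M x k + 1) (Xk M x (k + 1) + 1) (g (Xk M x k)) (g1 (Xk M x k))
        (g (Xk M x (k + 1))) (g1 (Xk M x (k + 1))) (y + 1)"
    unfolding Hk_def e1 e2 gp g1p ..
  also have "\<dots> = Hk M x g g1 k y" unfolding Hk_def by (rule herm_shift(1))
  finally show ?thesis by (simp add: vv_def k_def)
qed

lemma vv_in_Vh:
  assumes sm: "space_mesh M x" and gp: "\<And>y. g (y + 1) = g y" and g1p: "\<And>y. g1 (y + 1) = g1 y"
  shows "vv M x g g1 \<in> Vh M x"
  unfolding Vh_def
proof (intro CollectI conjI allI impI)
  show "vv M x g g1 (y + 1) = vv M x g g1 y" for y using vv_period[OF sm, of g g1 y] gp g1p by blast
  show "\<exists>v'. continuous_on UNIV v' \<and> (\<forall>y. (vv M x g g1 has_real_derivative v' y) (at y))"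
    by (rule exI[of _ "vv1 M x g g1"]) (use vv1_cont[OF sm] vv_deriv[OF sm] in \<open>auto intro: continuous_at_imp_continuous_on\<close>)
  fix j assume j: "j < M"
  obtain a b c d where abcd: "\<forall>y. Hk M x g g1 (int j) y = a + b * y + c * y^2 + d * y^3"
    using herm_poly unfolding Hk_def by blast
  show "\<exists>a b c d. \<forall>y\<in>{x j..x (Suc j)}. vv M x g g1 y = a + b * y + c * y ^ 2 + d * y ^ 3"
    using vv_on(1)[OF sm, of "int j" _ g g1] Xk_int[OF sm j] abcd by (intro exI[of _ a] exI[of _ b] exI[of _ c] exI[of _ d]) auto
qed

lemma vv_interp_conds:
  assumes sm: "space_mesh M x" and gd: "\<And>y. (g has_real_derivative g1 y) (at y)" and j: "j < M"
  shows "vv M x g g1 (x j) = g (x j)" "deriv (vv M x g g1) (x j) = deriv g (x j)"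
proof -
  have k: "Xk M x (int j) \<le> x j" "x j \<le> Xk M x (int j + 1)"
    using Xk_int[OF sm j] Xk_step[OF sm, of "int j"] by auto
  show "vv M x g g1 (x j) = g (x j)"
    using vv_on(1)[OF sm k] Hk_ends(1)[OF sm, of g g1 "int j"] Xk_int[OF sm j] by simp
  have "deriv (vv M x g g1) (x j) = vv1 M x g g1 (x j)" by (rule DERIV_imp_deriv[OF vv_deriv[OF sm]])
  also have "\<dots> = g1 (x j)"
    using vv_on(2)[OF sm k] Hk_ends(2)[OF sm, of g g1 "int j"] Xk_int[OF sm j] by simp
  also have "\<dots> = deriv g (x j)" by (rule DERIV_imp_deriv[OF gd, symmetric])
  finally show "deriv (vv M x g g1) (x j) = deriv g (x j)" .
qed

lemma herm_unique:
  fixes a b c d al be :: real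
  assumes ab: "al < be"
    and hA: "a + b * al + c * al^2 + d * al^3 = A" and hA': "b + 2 * c * al + 3 * d * al^2 = A'"
    and hB: "a + b * be + c * be^2 + d * be^3 = B" and hB': "b + 2 * c * be + 3 * d * be^2 = B'"
  shows "a + b * y + c * y^2 + d * y^3 = herm al be A A' B B' y"
proof -
  define l where "l = be - al"
  have l: "l \<noteq> 0" using ab by (simp add: l_def)
  define C2 where "C2 = c + 3 * d * al"
  define C3 where "C3 = d"
  have T: "a + b * z + c * z^2 + d * z^3 = A + A' * (z - al) + C2 * (z - al)^2 + C3 * (z - al)^3" for z
    unfolding hA[symmetric] hA'[symmetric] C2_def C3_def
    by (simp add: power2_eq_square power3_eq_cube algebra_simps)
  have T': "b + 2 * c * z + 3 * d * z^2 = A' + 2 * C2 * (z - al) + 3 * C3 * (z - al)^2" for z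
    unfolding hA'[symmetric] C2_def C3_def
    by (simp add: power2_eq_square algebra_simps)
  have D: "B - A - A' * l = C2 * l^2 + C3 * l^3" using T[of be] hB by (simp add: l_def)
  have E: "B' - A' = 2 * C2 * l + 3 * C3 * l^2" using T'[of be] hB' by (simp add: l_def)
  have n2: "3 * (B - A - A' * l) - (B' - A') * l = C2 * l^2"
    unfolding D E by (simp add: power2_eq_square power3_eq_cube algebra_simps)
  have n3: "(B' - A') * l - 2 * (B - A - A' * l) = C3 * l^3"
    unfolding D E by (simp add: power2_eq_square power3_eq_cube algebra_simps)
  have h2: "hc2 al be A A' B B' = C2"
    unfolding hc2_def l_def[symmetric] n2 using l by simp
  have h3: "hc3 al be A A' B B' = C3"
    unfolding hc3_def l_def[symmetric] n3 using l by simp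
  show ?thesis unfolding T herm_def h2 h3 ..
qed

lemma poly_deriv_at:
  "((\<lambda>y. a + b * y + c * y^2 + d * y^3) has_real_derivative (b + 2 * c * y + 3 * d * y^2)) (at y within S)"
  by (auto intro!: derivative_eq_intros simp: power2_eq_square)

lemma deriv_within_unique_real:
  fixes f :: "real \<Rightarrow> real"
  assumes "a < b" "z \<in> {a..b}"
    "(f has_real_derivative D1) (at z within {a..b})" "(f has_real_derivative D2) (at z within {a..b})"
  shows "D1 = D2"
  using vector_derivative_unique_within_closed_interval[of a b z f D1 D2] assms
  by (simp add: has_real_derivative_iff_has_vector_derivative)

lemma periodic_shift:
  fixes f :: "real \<Rightarrow> 'a"
  assumes p: "\<And>y. f (y + 1) = f y"
  shows "f (y + of_int n) = f y"
proof -
  have nat: "f (z + of_nat m) = f z" for z m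
  proof (induction m)
    case 0 then show ?case by simp
  next
    case (Suc m)
    have "z + of_nat (Suc m) = (z + of_nat m) + 1" by simp
    then have "f (z + of_nat (Suc m)) = f ((z + of_nat m) + 1)" by (simp only:)
    then show ?case using p Suc by simp
  qed
  show ?thesis
  proof (cases "n \<ge> 0")
    case True
    then show ?thesis using nat[of y "nat n"] by simp
  next
    case False
    have "f ((y + of_int n) + of_nat (nat (- n))) = f (y + of_int n)" by (rule nat)
    then show ?thesis using False by simp
  qed
qed

lemma deriv_periodic:
  fixes f f' :: "real \<Rightarrow> real"
  assumes p: "\<And>y. f (y + 1) = f y" and d: "\<And>y. (f has_real_derivative f' y) (at y)"
  shows "f' (y + 1) = f' y"
proof -
  have "((\<lambda>z. f (z + 1)) has_real_derivative f' (y + 1)) (at y)"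
    using d[of "y + 1"] by (simp add: DERIV_shift)
  then have "(f has_real_derivative f' (y + 1)) (at y)" using p by simp
  then show ?thesis using d[of y] by (rule DERIV_unique)
qed

lemma mesh_cover:
  assumes sm: "space_mesh M x" and y: "0 \<le> y" "y \<le> 1"
  shows "\<exists>j<M. x j \<le> y \<and> y \<le> x (Suc j)"
proof -
  have M1: "M \<ge> 1" using sm by (simp add: space_mesh_def)
  define S where "S = {j. j < M \<and> x j \<le> y}"
  have S0: "0 \<in> S" using sm y M1 by (simp add: S_def space_mesh_def)
  have Sf: "finite S" by (simp add: S_def)
  define j where "j = Max S"
  have jS: "j \<in> S" using S0 Sf j_def by (metis Max_in empty_iff)
  then have jM: "j < M" and xj: "x j \<le> y" by (auto simp: S_def)
  have "y \<le> x (Suc j)"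
  proof (cases "Suc j < M")
    case True
    have "Suc j \<notin> S" using Sf j_def by (metis Max_ge Suc_n_not_le_n)
    then show ?thesis using True by (auto simp: S_def)
  next
    case False
    then have "Suc j = M" using jM by simp
    then show ?thesis using sm y by (simp add: space_mesh_def)
  qed
  then show ?thesis using jM xj by blast
qed

lemma Vh_unique:
  assumes sm: "space_mesh M x"
    and gp: "\<And>y. g (y + 1) = g y" and gd: "\<And>y. (g has_real_derivative g1 y) (at y)"
    and w: "w \<in> Vh M x"
    and wc: "\<forall>j<M. w (x j) = g (x j) \<and> deriv w (x j) = deriv g (x j)"
  shows "w = vv M x g g1"
proof -
  have M1: "M \<ge> 1" using sm by (simp add: space_mesh_def)
  have g1p: "g1 (y + 1) = g1 y" for y by (rule deriv_periodic[OF gp gd])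
  have wp: "\<And>y. w (y + 1) = w y" using w by (simp add: Vh_def)
  obtain w' where w'd: "\<And>y. (w has_real_derivative w' y) (at y)"
    using w by (auto simp: Vh_def)
  have w'p: "w' (y + 1) = w' y" for y by (rule deriv_periodic[OF wp w'd])
  have dw: "deriv w y = w' y" for y by (rule DERIV_imp_deriv[OF w'd])
  have dg: "deriv g y = g1 y" for y by (rule DERIV_imp_deriv[OF gd])
  have x0: "x 0 = 0" and xM: "x M = 1" using sm by (simp_all add: space_mesh_def)
  have data: "w (x j) = g (x j) \<and> w' (x j) = g1 (x j)" if "j \<le> M" for j
  proof (cases "j < M")
    case True then show ?thesis using wc dw dg by auto
  next
    case False
    then have jM: "j = M" using that by simp
    have "w 1 = w 0" using wp[of 0] by simp
    moreover have "w' 1 = w' 0" using w'p[of 0] by simp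
    moreover have "g 1 = g 0" using gp[of 0] by simp
    moreover have "g1 1 = g1 0" using g1p[of 0] by simp
    moreover have "w 0 = g 0" "w' 0 = g1 0" using wc M1 dw dg x0 by auto
    ultimately show ?thesis using jM xM by simp
  qed
  have onI: "w y = vv M x g g1 y" if j: "j < M" and y: "x j \<le> y" "y \<le> x (Suc j)" for j y
  proof -
    define al where "al = x j"
    define be where "be = x (Suc j)"
    have ab: "al < be" using sm j by (simp add: space_mesh_def al_def be_def)
    obtain a b c d where q: "\<forall>z\<in>{al..be}. w z = a + b * z + c * z^2 + d * z^3"
      using w j unfolding Vh_def al_def be_def by blast
    have dq: "w' z = b + 2 * c * z + 3 * d * z^2" if z: "z \<in> {al..be}" for z
    proof -
      have "(w has_real_derivative w' z) (at z within {al..be})"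
        using w'd by (rule has_field_derivative_at_within)
      moreover have "(w has_real_derivative (b + 2 * c * z + 3 * d * z^2)) (at z within {al..be})"
        by (rule has_field_derivative_transform_within[OF poly_deriv_at, of 1 _ "{al..be}"]) (use z q in auto)
      ultimately show ?thesis using deriv_within_unique_real[OF ab z] by blast
    qed
    have dal: "w al = g al \<and> w' al = g1 al" using data[of j] j by (simp add: al_def)
    have dbe: "w be = g be \<and> w' be = g1 be" using data[of "Suc j"] j by (simp add: be_def)
    have yin: "y \<in> {al..be}" using y by (simp add: al_def be_def)
    have "w y = a + b * y + c * y^2 + d * y^3" using q yin by blast
    also have "\<dots> = herm al be (g al) (g1 al) (g be) (g1 be) y"
    proof (rule herm_unique[OF ab])
      show "a + b * al + c * al^2 + d * al^3 = g al" using q dal ab by auto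
      show "b + 2 * c * al + 3 * d * al^2 = g1 al" using dq[of al] dal ab by auto
      show "a + b * be + c * be^2 + d * be^3 = g be" using q dbe ab by auto
      show "b + 2 * c * be + 3 * d * be^2 = g1 be" using dq[of be] dbe ab by auto
    qed
    also have "\<dots> = Hk M x g g1 (int j) y"
      unfolding Hk_def Xk_int[OF sm j] al_def be_def ..
    also have "\<dots> = vv M x g g1 y"
      using vv_on(1)[OF sm, of "int j" y g g1] Xk_int[OF sm j] y by simp
    finally show ?thesis .
  qed
  have on01: "w y = vv M x g g1 y" if "0 \<le> y" "y \<le> 1" for y
    using mesh_cover[OF sm that] onI by blast
  show ?thesis
  proof (rule ext)
    fix y :: real
    define n where "n = floor y"
    define z where "z = y - of_int n"
    have z: "0 \<le> z" "z \<le> 1" unfolding z_def n_def by linarith+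
    have yz: "y = z + of_int n" by (simp add: z_def)
    have vp: "\<And>u. vv M x g g1 (u + 1) = vv M x g g1 u" using vv_period[OF sm, of g g1] gp g1p by blast
    show "w y = vv M x g g1 y"
      unfolding yz periodic_shift[of w, OF wp] periodic_shift[of "vv M x g g1", OF vp] using on01[OF z] .
  qed
qed

lemma mesh_mono:
  assumes sm: "space_mesh M x" and "i \<le> m" "m \<le> M"
  shows "x i \<le> x m"
  using assms(2,3)
proof (induction m)
  case 0 then show ?case by simp
next
  case (Suc m)
  show ?case
  proof (cases "i = Suc m")
    case True then show ?thesis by simp
  next
    case False
    then have "i \<le> m" "m \<le> M" using Suc.prems by auto
    then have "x i \<le> x m" using Suc.IH by simp
    moreover have "x m < x (Suc m)" using sm Suc.prems by (simp add: space_mesh_def)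
    ultimately show ?thesis by simp
  qed
qed

lemma has_integral_mesh_sum:
  fixes f :: "real \<Rightarrow> real"
  assumes sm: "space_mesh M x" and I: "\<And>j. j < M \<Longrightarrow> (f has_integral I j) {x j..x (Suc j)}"
  shows "(f has_integral (\<Sum>j<M. I j)) {0..1}"
proof -
  have "m \<le> M \<Longrightarrow> (f has_integral (\<Sum>j<m. I j)) {x 0..x m}" for m
  proof (induction m)
    case 0 then show ?case using has_integral_null_real[of "x 0" "x 0" f] by simp
  next
    case (Suc m)
    have "(f has_integral ((\<Sum>j<m. I j) + I m)) {x 0..x (Suc m)}"
    proof (rule has_integral_combine)
      show "x 0 \<le> x m" using mesh_mono[OF sm, of 0 m] Suc.prems by simp
      show "x m \<le> x (Suc m)" using sm Suc.prems by (simp add: space_mesh_def less_imp_le)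
      show "(f has_integral (\<Sum>j<m. I j)) {x 0..x m}" using Suc by simp
      show "(f has_integral I m) {x m..x (Suc m)}" using I Suc.prems by simp
    qed
    then show ?case by simp
  qed
  from this[of M] show ?thesis using sm by (simp add: space_mesh_def)
qed

lemma interp_eq:
  assumes sm: "space_mesh M x" and H: "H2_per g g1 g2"
  shows "interp M x g = vv M x g g1"
proof -
  have gp: "\<And>y. g (y + 1) = g y" and gd: "\<And>y. (g has_real_derivative g1 y) (at y)"
    using H by (auto simp: H2_per_def)
  have g1p: "\<And>y. g1 (y + 1) = g1 y" by (rule deriv_periodic[OF gp gd])
  show ?thesis unfolding interp_def
  proof (rule the_equality)
    show "vv M x g g1 \<in> Vh M x \<and> (\<forall>j<M. vv M x g g1 (x j) = g (x j) \<and> deriv (vv M x g g1) (x j) = deriv g (x j))"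
      using vv_in_Vh[OF sm, of g g1] gp g1p vv_interp_conds[OF sm gd] by blast
    fix w assume "w \<in> Vh M x \<and> (\<forall>j<M. w (x j) = g (x j) \<and> deriv w (x j) = deriv g (x j))"
    then show "w = vv M x g g1" using Vh_unique[OF sm gp gd] by blast
  qed
qed

lemma dd_vv:
  assumes sm: "space_mesh M x" and j: "j < M" and y: "x j < y" "y < x (Suc j)"
  shows "deriv (deriv (vv M x g g1)) y = H2k M x g g1 (int j) y"
proof -
  have dv: "deriv (vv M x g g1) = vv1 M x g g1"
    by (rule ext, rule DERIV_imp_deriv[OF vv_deriv[OF sm]])
  have "(vv1 M x g g1 has_real_derivative H2k M x g g1 (int j) y) (at y)"
  proof (rule has_field_derivative_transform_within_open[OF Hk_deriv(2), where S="{x j<..<x (Suc j)}"])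
    show "y \<in> {x j<..<x (Suc j)}" using y by simp
    show "H1k M x g g1 (int j) z = vv1 M x g g1 z" if "z \<in> {x j<..<x (Suc j)}" for z
      using vv_on(2)[OF sm, of "int j" z g g1] Xk_int[OF sm j] that by simp
  qed simp
  then show ?thesis unfolding dv by (rule DERIV_imp_deriv)
qed

lemma pointwise_sq:
  fixes G V dt :: real
  assumes dt: "0 < dt"
  shows "V^2 \<le> (1 + dt) * G^2 + (1 + 1 / dt) * (G - V)^2"
proof -
  have e: "dt * (1 + 1 / dt) = dt + 1" using dt by (simp add: field_simps)
  have "dt * ((1 + dt) * G^2 + (1 + 1 / dt) * (G - V)^2 - V^2)
      = dt * (1 + dt) * G^2 + (dt * (1 + 1 / dt)) * (G - V)^2 - dt * V^2"
    by (simp add: algebra_simps)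
  also have "\<dots> = (dt * G + (G - V))^2" unfolding e by (simp add: power2_eq_square algebra_simps)
  finally have "0 \<le> dt * ((1 + dt) * G^2 + (1 + 1 / dt) * (G - V)^2 - V^2)" by simp
  then show ?thesis using dt by (simp add: zero_le_mult_iff)
qed

lemma sqrt_le_self:
  assumes "1 \<le> u" shows "sqrt u \<le> (u::real)"
proof -
  have s1: "1 \<le> sqrt u" using assms by simp
  have "sqrt u * 1 \<le> sqrt u * sqrt u" using s1 by (intro mult_left_mono) auto
  also have "\<dots> = u" using assms by simp
  finally show ?thesis by simp
qed

lemma core:
  assumes sm: "space_mesh M x" and H: "H2_per g g1 g2" and dt: "0 < dt"
  shows "H2hdt_norm (mesh_h M x) dt (interp M x g) (deriv (deriv (interp M x g)))
           \<le> (1 + dt) * H2hdt_norm (mesh_h M x) dt g g2"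
proof -
  have gp: "\<And>y. g (y + 1) = g y" and gd: "\<And>y. (g has_real_derivative g1 y) (at y)"
    and g2i: "\<And>a b. g2 integrable_on {a..b}" and g22i: "\<And>a b. (\<lambda>y. (g2 y)^2) integrable_on {a..b}"
    and g1i: "\<And>a b. a \<le> b \<Longrightarrow> g1 b - g1 a = integral {a..b} g2"
    using H by (auto simp: H2_per_def)
  have M1: "M \<ge> 1" using sm by (simp add: space_mesh_def)
  define v where "v = vv M x g g1"
  have iv: "interp M x g = v" unfolding v_def by (rule interp_eq[OF sm H])
  define h where "h = mesh_h M x"
  define l where "l = (\<lambda>j. x (Suc j) - x j)"
  have lpos: "l j > 0" if "j < M" for j using sm that by (simp add: space_mesh_def l_def)
  have lh: "l j \<le> h" if "j < M" for j
  proof -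
    have fin: "finite {x (Suc j) - x j | j. j < M}" by simp
    show ?thesis unfolding h_def mesh_h_def l_def using that by (intro Max_ge[OF fin]) auto
  qed
  have h0: "0 \<le> h" using lh[of 0] lpos[of 0] M1 by simp
  define p where "p = (\<lambda>j. Hk M x g g1 (int j))"
  define p2 where "p2 = (\<lambda>j. H2k M x g g1 (int j))"
  define Ej where "Ej = (\<lambda>j. integral {x j..x (Suc j)} (\<lambda>y. (g y - p j y)^2))"
  define Gj where "Gj = (\<lambda>j. integral {x j..x (Suc j)} (\<lambda>y. (g2 y)^2))"
  define Qj where "Qj = (\<lambda>j. integral {x j..x (Suc j)} (\<lambda>y. (p2 j y)^2))"
  have gcont: "continuous_on S g" for S
    using gd by (meson DERIV_isCont continuous_at_imp_continuous_on)
  have vcont: "continuous_on S v" for S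
    using vv_deriv[OF sm] unfolding v_def by (meson DERIV_isCont continuous_at_imp_continuous_on)
  have pcont: "continuous_on S (p j)" for S j
    unfolding p_def using Hk_deriv(1) by (meson DERIV_isCont continuous_at_imp_continuous_on)
  have p2cont: "continuous_on S (p2 j)" for S j
    unfolding p2_def H2k_def herm2_def by (intro continuous_intros)
  have loc: "Ej j \<le> (l j)^4 * (Gj j - Qj j)" if j: "j < M" for j
  proof -
    have ab: "x j < x (Suc j)" using lpos[OF j] by (simp add: l_def)
    have "p j = herm (x j) (x (Suc j)) (g (x j)) (g1 (x j)) (g (x (Suc j))) (g1 (x (Suc j)))"
      unfolding p_def Hk_def Xk_int[OF sm j] ..
    moreover have "p2 j = herm2 (x j) (x (Suc j)) (g (x j)) (g1 (x j)) (g (x (Suc j))) (g1 (x (Suc j)))"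
      unfolding p2_def H2k_def Xk_int[OF sm j] ..
    ultimately show ?thesis
      using local_est[OF ab gd g2i g22i g1i] unfolding Ej_def Gj_def Qj_def l_def by simp
  qed
  have Ej0: "0 \<le> Ej j" for j unfolding Ej_def
    by (intro integral_nonneg integrable_continuous_interval continuous_intros gcont pcont) auto
  have Qj0: "0 \<le> Qj j" for j unfolding Qj_def
    by (intro integral_nonneg integrable_continuous_interval continuous_intros p2cont) auto
  have GQ: "0 \<le> Gj j - Qj j" if j: "j < M" for j
  proof -
    have "0 \<le> (l j)^4 * (Gj j - Qj j)" using loc[OF j] Ej0[of j] by linarith
    then show ?thesis using lpos[OF j] by (simp add: zero_le_mult_iff)
  qed
  define E where "E = integral {0..1} (\<lambda>y. (g y - v y)^2)"
  define G where "G = integral {0..1} (\<lambda>y. (g2 y)^2)"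
  define Q where "Q = integral {0..1} (\<lambda>y. (deriv (deriv v) y)^2)"
  define A where "A = integral {0..1} (\<lambda>y. (g y)^2)"
  define V where "V = integral {0..1} (\<lambda>y. (v y)^2)"
  have Esum: "E = (\<Sum>j<M. Ej j)"
  proof -
    have "((\<lambda>y. (g y - v y)^2) has_integral (\<Sum>j<M. Ej j)) {0..1}"
    proof (rule has_integral_mesh_sum[OF sm])
      fix j assume j: "j < M"
      have "((\<lambda>y. (g y - p j y)^2) has_integral Ej j) {x j..x (Suc j)}"
        unfolding Ej_def
        by (intro integrable_integral integrable_continuous_interval continuous_intros gcont pcont)
      moreover have "(g y - p j y)^2 = (g y - v y)^2" if "y \<in> {x j..x (Suc j)}" for y
        using vv_on(1)[OF sm, of "int j" y g g1] Xk_int[OF sm j] that unfolding v_def p_def by simp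
      ultimately show "((\<lambda>y. (g y - v y)^2) has_integral Ej j) {x j..x (Suc j)}"
        using has_integral_cong by (metis (no_types, lifting))
    qed
    then show ?thesis unfolding E_def by (rule integral_unique)
  qed
  have Gsum: "G = (\<Sum>j<M. Gj j)"
  proof -
    have "((\<lambda>y. (g2 y)^2) has_integral (\<Sum>j<M. Gj j)) {0..1}"
      by (rule has_integral_mesh_sum[OF sm]) (unfold Gj_def, rule integrable_integral[OF g22i])
    then show ?thesis unfolding G_def by (rule integral_unique)
  qed
  have Qsum: "Q = (\<Sum>j<M. Qj j)"
  proof -
    have "((\<lambda>y. (deriv (deriv v) y)^2) has_integral (\<Sum>j<M. Qj j)) {0..1}"
    proof (rule has_integral_mesh_sum[OF sm])
      fix j assume j: "j < M"
      have hp: "((\<lambda>y. (p2 j y)^2) has_integral Qj j) {x j..x (Suc j)}"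
        unfolding Qj_def
        by (intro integrable_integral integrable_continuous_interval continuous_intros p2cont)
      show "((\<lambda>y. (deriv (deriv v) y)^2) has_integral Qj j) {x j..x (Suc j)}"
      proof (rule has_integral_spike_finite[of "{x j, x (Suc j)}" _ _ _ _, OF _ _ hp])
        show "(deriv (deriv v) y)^2 = (p2 j y)^2" if "y \<in> {x j..x (Suc j)} - {x j, x (Suc j)}" for y
          using dd_vv[OF sm j, of y g g1] that unfolding v_def p2_def by simp
      qed simp
    qed
    then show ?thesis unfolding Q_def by (rule integral_unique)
  qed
  have Q0: "0 \<le> Q" unfolding Qsum by (intro sum_nonneg Qj0)
  have EGQ: "E \<le> h^4 * (G - Q)"
  proof -
    have "E \<le> (\<Sum>j<M. (l j)^4 * (Gj j - Qj j))" unfolding Esum by (intro sum_mono loc) simp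
    also have "\<dots> \<le> (\<Sum>j<M. h^4 * (Gj j - Qj j))"
      by (intro sum_mono mult_right_mono power_mono lh GQ) (auto intro: less_imp_le lpos)
    also have "\<dots> = h^4 * (G - Q)" unfolding Gsum Qsum by (simp only: sum_distrib_left[symmetric] sum_subtractf)
    finally show ?thesis .
  qed
  have A0: "0 \<le> A" unfolding A_def
    by (intro integral_nonneg integrable_continuous_interval continuous_intros gcont) auto
  have G0: "0 \<le> G" unfolding G_def by (intro integral_nonneg g22i) auto
  have VAE: "V \<le> (1 + dt) * A + (1 + 1 / dt) * E"
  proof -
    have i1: "(\<lambda>y. (g y)^2) integrable_on {0..1}"
      by (intro integrable_continuous_interval continuous_intros gcont)
    have i2: "(\<lambda>y. (g y - v y)^2) integrable_on {0..1}"
      by (intro integrable_continuous_interval continuous_intros gcont vcont)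
    have i3: "(\<lambda>y. (v y)^2) integrable_on {0..1}"
      by (intro integrable_continuous_interval continuous_intros vcont)
    have j1: "(\<lambda>y. (1 + dt) * (g y)^2) integrable_on {0..1}"
      using integrable_on_cmult_left[OF i1, of "1 + dt"] by simp
    have j2: "(\<lambda>y. (1 + 1 / dt) * (g y - v y)^2) integrable_on {0..1}"
      using integrable_on_cmult_left[OF i2, of "1 + 1 / dt"] by simp
    have "V \<le> integral {0..1} (\<lambda>y. (1 + dt) * (g y)^2 + (1 + 1 / dt) * (g y - v y)^2)"
      unfolding V_def
      by (intro integral_le i3 integrable_add j1 j2 pointwise_sq dt)
    also have "\<dots> = (1 + dt) * A + (1 + 1 / dt) * E"
      unfolding A_def E_def using j1 j2 by (simp add: integral_add)
    finally show ?thesis .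
  qed
  define k where "k = h^4 / dt"
  have kk: "h^4 = dt * k" "(1 + 1 / dt) * h^4 = h^4 + k" using dt by (simp_all add: k_def field_simps)
  have k0: "0 \<le> k" using h0 dt by (simp add: k_def)
  have main: "V + k * Q \<le> (1 + dt) * (A + k * G)"
  proof -
    have "V + k * Q \<le> (1 + dt) * A + (1 + 1 / dt) * E + k * Q" using VAE by simp
    also have "\<dots> \<le> (1 + dt) * A + (1 + 1 / dt) * (h^4 * (G - Q)) + k * Q"
      using EGQ dt by (simp add: mult_left_mono)
    also have "(1 + 1 / dt) * (h^4 * (G - Q)) = (h^4 + k) * (G - Q)"
      using kk(2) by (simp add: mult.assoc[symmetric])
    also have "(1 + dt) * A + (h^4 + k) * (G - Q) + k * Q = (1 + dt) * A + h^4 * (G - Q) + k * G"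
      by (simp add: algebra_simps)
    also have "\<dots> \<le> (1 + dt) * A + h^4 * G + k * G"
      using Q0 h0 by (simp add: algebra_simps)
    also have "\<dots> = (1 + dt) * (A + k * G)" unfolding kk(1) by (simp add: algebra_simps)
    finally show ?thesis .
  qed
  have "H2hdt_norm h dt v (deriv (deriv v)) = sqrt (V + k * Q)"
    unfolding H2hdt_norm_def V_def Q_def k_def ..
  also have "\<dots> \<le> sqrt ((1 + dt) * (A + k * G))" using main by simp
  also have "\<dots> = sqrt (1 + dt) * sqrt (A + k * G)" by (simp add: real_sqrt_mult)
  also have "\<dots> \<le> (1 + dt) * sqrt (A + k * G)"
    using sqrt_le_self[of "1 + dt"] dt A0 G0 k0 by (intro mult_right_mono) auto
  also have "sqrt (A + k * G) = H2hdt_norm h dt g g2"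
    unfolding H2hdt_norm_def A_def G_def k_def ..
  finally show ?thesis unfolding iv h_def .
qed

lemma dt_pos:
  assumes "time_mesh N t T"
  shows "0 < dt_max N t"
proof -
  have N1: "N \<ge> 1" and inc: "\<forall>n<N. t n < t (Suc n)" using assms by (auto simp: time_mesh_def)
  have fin: "finite {t (Suc n) - t n | n. n < N}" by simp
  have "t (Suc 0) - t 0 \<le> dt_max N t"
    unfolding dt_max_def using N1 by (intro Max_ge[OF fin]) auto
  moreover have "0 < t (Suc 0) - t 0" using inc N1 by auto
  ultimately show ?thesis by linarith
qed

lemma dt_min_le:
  assumes "time_mesh N t T" and "n < N"
  shows "dt_min N t \<le> t (Suc n) - t n"
proof -
  have fin: "finite {t (Suc n) - t n | n. n < N}" by simp
  show ?thesis unfolding dt_min_def using assms(2) by (intro Min_le[OF fin]) auto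
qed

lemma norm_g_nonneg:
  assumes sm: "space_mesh M x" and H: "H2_per g g1 g2" and dt: "0 < dt"
  shows "0 \<le> H2hdt_norm (mesh_h M x) dt g g2"
proof -
  have gd: "\<And>y. (g has_real_derivative g1 y) (at y)"
    and g22i: "\<And>a b. (\<lambda>y. (g2 y)^2) integrable_on {a..b}"
    using H by (auto simp: H2_per_def)
  have gcont: "continuous_on S g" for S
    using gd by (meson DERIV_isCont continuous_at_imp_continuous_on)
  have M1: "M \<ge> 1" and inc: "\<forall>j<M. x j < x (Suc j)" using sm by (auto simp: space_mesh_def)
  have fin: "finite {x (Suc j) - x j | j. j < M}" by simp
  have "x (Suc 0) - x 0 \<le> mesh_h M x"
    unfolding mesh_h_def using M1 by (intro Max_ge[OF fin]) auto
  then have h0: "0 \<le> mesh_h M x" using inc M1 by force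
  have A0: "0 \<le> integral {0..1} (\<lambda>y. (g y)^2)"
    by (intro integral_nonneg integrable_continuous_interval continuous_intros gcont) auto
  have G0: "0 \<le> integral {0..1} (\<lambda>y. (g2 y)^2)" by (intro integral_nonneg g22i) auto
  show ?thesis unfolding H2hdt_norm_def using A0 G0 h0 dt by simp
qed

theorem lemma5:
  fixes T :: real
  assumes "T > 0"
  shows "(\<exists>C>0. \<forall>N t M x g g1 g2.
            time_mesh N t T \<and> dt_max N t < 1 \<and> space_mesh M x \<and> H2_per g g1 g2 \<longrightarrow>
            H2hdt_norm (mesh_h M x) (dt_max N t) (interp M x g) (deriv (deriv (interp M x g)))
              \<le> (1 + C * dt_max N t) * H2hdt_norm (mesh_h M x) (dt_max N t) g g2)
       \<and> (\<forall>C2>0. \<exists>C>0. \<forall>N t M x g g1 g2.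
            time_mesh N t T \<and> dt_max N t < 1 \<and> space_mesh M x \<and> H2_per g g1 g2
            \<and> dt_max N t \<le> C2 * dt_min N t \<longrightarrow>
            (\<forall>n<N. H2hdt_norm (mesh_h M x) (dt_max N t) (interp M x g) (deriv (deriv (interp M x g)))
              \<le> (1 + C * (t (Suc n) - t n)) * H2hdt_norm (mesh_h M x) (dt_max N t) g g2))"
proof (intro conjI)
  show "\<exists>C>0. \<forall>N t M x g g1 g2.
            time_mesh N t T \<and> dt_max N t < 1 \<and> space_mesh M x \<and> H2_per g g1 g2 \<longrightarrow>
            H2hdt_norm (mesh_h M x) (dt_max N t) (interp M x g) (deriv (deriv (interp M x g)))
              \<le> (1 + C * dt_max N t) * H2hdt_norm (mesh_h M x) (dt_max N t) g g2"
  proof (intro exI[of _ 1] conjI allI impI)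
    fix N t M x g g1 g2
    assume a: "time_mesh N t T \<and> dt_max N t < 1 \<and> space_mesh M x \<and> H2_per g g1 g2"
    show "H2hdt_norm (mesh_h M x) (dt_max N t) (interp M x g) (deriv (deriv (interp M x g)))
              \<le> (1 + 1 * dt_max N t) * H2hdt_norm (mesh_h M x) (dt_max N t) g g2"
      using core[of M x g g1 g2 "dt_max N t"] a dt_pos[of N t T] by simp
  qed simp
  show "\<forall>C2>0. \<exists>C>0. \<forall>N t M x g g1 g2.
            time_mesh N t T \<and> dt_max N t < 1 \<and> space_mesh M x \<and> H2_per g g1 g2
            \<and> dt_max N t \<le> C2 * dt_min N t \<longrightarrow>
            (\<forall>n<N. H2hdt_norm (mesh_h M x) (dt_max N t) (interp M x g) (deriv (deriv (interp M x g)))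
              \<le> (1 + C * (t (Suc n) - t n)) * H2hdt_norm (mesh_h M x) (dt_max N t) g g2)"
  proof (intro allI impI)
    fix C2 :: real assume C2: "C2 > 0"
    show "\<exists>C>0. \<forall>N t M x g g1 g2.
            time_mesh N t T \<and> dt_max N t < 1 \<and> space_mesh M x \<and> H2_per g g1 g2
            \<and> dt_max N t \<le> C2 * dt_min N t \<longrightarrow>
            (\<forall>n<N. H2hdt_norm (mesh_h M x) (dt_max N t) (interp M x g) (deriv (deriv (interp M x g)))
              \<le> (1 + C * (t (Suc n) - t n)) * H2hdt_norm (mesh_h M x) (dt_max N t) g g2)"
    proof (intro exI[of _ C2] conjI allI impI)
      fix N t M x g g1 g2 n
      assume a: "time_mesh N t T \<and> dt_max N t < 1 \<and> space_mesh M x \<and> H2_per g g1 g2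
            \<and> dt_max N t \<le> C2 * dt_min N t" and n: "n < N"
      have c: "H2hdt_norm (mesh_h M x) (dt_max N t) (interp M x g) (deriv (deriv (interp M x g)))
              \<le> (1 + dt_max N t) * H2hdt_norm (mesh_h M x) (dt_max N t) g g2"
        using core[of M x g g1 g2 "dt_max N t"] a dt_pos[of N t T] by simp
      have "dt_max N t \<le> C2 * (t (Suc n) - t n)"
        using a dt_min_le[of N t T n] n C2 by (meson mult_left_mono less_imp_le order_trans)
      moreover have "0 \<le> H2hdt_norm (mesh_h M x) (dt_max N t) g g2"
        using norm_g_nonneg[of M x g g1 g2 "dt_max N t"] a dt_pos[of N t T] by simp
      ultimately have "(1 + dt_max N t) * H2hdt_norm (mesh_h M x) (dt_max N t) g g2
          \<le> (1 + C2 * (t (Suc n) - t n)) * H2hdt_norm (mesh_h M x) (dt_max N t) g g2"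
        by (intro mult_right_mono) auto
      with c show "H2hdt_norm (mesh_h M x) (dt_max N t) (interp M x g) (deriv (deriv (interp M x g)))
              \<le> (1 + C2 * (t (Suc n) - t n)) * H2hdt_norm (mesh_h M x) (dt_max N t) g g2"
        by linarith
    qed (use C2 in simp)
  qed
qed

end
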